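(* Consider momentum gradient flow with parameter $\lambda>0$ on a 2-layer diagonal linear network as described in the context. Assume the trajectory $(u_t,v_t)$ is bounded and that the asymptotic balancedness $\Delta_\infty=\lim_{t\to\infty}\Delta_t$ has nonzero coordinates. Then there exists $T\ge0$ such that for all $t\ge T$, $\Delta_t$ has all coordinates positive, and the predictors $\theta_t=u_t\odot v_t$ follow a momentum mirror flow with time-varying potentials $\Phi_t$: $$\lambda\frac{\mathrm{d}^2\nabla\Phi_t(\theta_t)}{\mathrm{d}t^2}+\frac{\mathrm{d}\nabla\Phi_t(\theta_t)}{\mathrm{d}t}+\nabla L(\theta_t)=0,\qquad t\ge T.$$ Furthermore, if the balancedness $\Delta_t$ has nonzero coordinates for all $t\in[0,+\infty]$, this momentum mirror flow holds for every $t\ge0$.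
   Context: Data $x_1,\dots,x_n\in\mathbb{R}^d$, $y\in\mathbb{R}^n$, loss $L(\theta)=\frac{1}{2n}\sum_{i=1}^n(y_i-\langle x_i,\theta\rangle)^2$. Vector operations are coordinate-wise. Momentum gradient flow on the diagonal linear network: $(u_t,v_t)$ solves $\lambda\ddot u_t+\dot u_t+\nabla L(\theta_t)\odot v_t=0$, $\lambda\ddot v_t+\dot v_t+\nabla L(\theta_t)\odot u_t=0$, $\theta_t=u_t\odot v_t$, with $\dot u_0=\dot v_0=0$ and $|u_0^2-v_0^2|$ having all coordinates nonzero. $w_{\pm,t}=u_t\pm v_t$, $\Delta_t=|u_t^2-v_t^2|=|w_{+,t}w_{-,t}|$. Hyperbolic entropy: for $\Delta\in(0,\infty)^d$, $\psi_\Delta(\theta)=\frac14\sum_{i=1}^d\big(2\theta_i\mathrm{arcsinh}(2\theta_i/\Delta_i)-\sqrt{4\theta_i^2+\Delta_i^2}+\Delta_i\big)$. The potentials are defined (for $t$ with $\Delta_t>0$) by $\Phi_t(\theta)=\psi_{\Delta_t}(\theta)-\langle\phi_t,\theta\rangle$, where $\xi_t=-\int_0^t\nabla L(\theta_s)(1-e^{-(t-s)/\lambda})\,\mathrm{d}s$, $\alpha_{\pm,t}=w_{\pm,t}\odot\exp(\mp\xi_t)$, and $\phi_t=\frac12\mathrm{arcsinh}\Big(\frac{\alpha_{+,t}^2-\alpha_{-,t}^2}{2\Delta_t}\Big)$. *)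

theory Defs
  imports "HOL-Analysis.Analysis"
begin

text \<open>Coordinate-wise operations on real^'d: the product x * y on vec is componentwise
 (vector_mult_component). Gradient = vector of partial derivatives.\<close>

definition grad :: "(real^'d \<Rightarrow> real) \<Rightarrow> real^'d \<Rightarrow> real^'d" where
  "grad f x = (\<chi> i. deriv (\<lambda>s. f (x + s *\<^sub>R axis i 1)) 0)"

text \<open>Square loss; row i of X is the data point x_i, n = CARD('n).\<close>
definition sqloss :: "real^'d^'n \<Rightarrow> real^'n \<Rightarrow> real^'d \<Rightarrow> real" where
  "sqloss X y \<theta> = (1 / (2 * real CARD('n))) * (\<Sum>i\<in>UNIV. (y $ i - inner (X $ i) \<theta>)\<^sup>2)"

definition Delta :: "(real \<Rightarrow> real^'d) \<Rightarrow> (real \<Rightarrow> real^'d) \<Rightarrow> real \<Rightarrow> real^'d" where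
  "Delta u v t = (\<chi> i. \<bar>(u t $ i)\<^sup>2 - (v t $ i)\<^sup>2\<bar>)"

definition hyp_entropy :: "real^'d \<Rightarrow> real^'d \<Rightarrow> real" where
  "hyp_entropy D \<theta> = (1/4) * (\<Sum>i\<in>UNIV. 2 * \<theta> $ i * arsinh (2 * \<theta> $ i / D $ i)
        - sqrt (4 * (\<theta> $ i)\<^sup>2 + (D $ i)\<^sup>2) + D $ i)"

definition xi :: "(real^'d \<Rightarrow> real) \<Rightarrow> real \<Rightarrow> (real \<Rightarrow> real^'d) \<Rightarrow> (real \<Rightarrow> real^'d) \<Rightarrow> real \<Rightarrow> real^'d" where
  "xi L lam u v t = - integral {0..t} (\<lambda>s. (1 - exp (- (t - s) / lam)) *\<^sub>R grad L (u s * v s))"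

definition alpha_plus :: "(real^'d \<Rightarrow> real) \<Rightarrow> real \<Rightarrow> (real \<Rightarrow> real^'d) \<Rightarrow> (real \<Rightarrow> real^'d) \<Rightarrow> real \<Rightarrow> real^'d" where
  "alpha_plus L lam u v t = (\<chi> i. (u t $ i + v t $ i) * exp (- (xi L lam u v t $ i)))"

definition alpha_minus :: "(real^'d \<Rightarrow> real) \<Rightarrow> real \<Rightarrow> (real \<Rightarrow> real^'d) \<Rightarrow> (real \<Rightarrow> real^'d) \<Rightarrow> real \<Rightarrow> real^'d" where
  "alpha_minus L lam u v t = (\<chi> i. (u t $ i - v t $ i) * exp (xi L lam u v t $ i))"

definition phi :: "(real^'d \<Rightarrow> real) \<Rightarrow> real \<Rightarrow> (real \<Rightarrow> real^'d) \<Rightarrow> (real \<Rightarrow> real^'d) \<Rightarrow> real \<Rightarrow> real^'d" where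
  "phi L lam u v t = (\<chi> i. (1/2) * arsinh (((alpha_plus L lam u v t $ i)\<^sup>2 - (alpha_minus L lam u v t $ i)\<^sup>2)
                                 / (2 * Delta u v t $ i)))"

definition Phi :: "(real^'d \<Rightarrow> real) \<Rightarrow> real \<Rightarrow> (real \<Rightarrow> real^'d) \<Rightarrow> (real \<Rightarrow> real^'d) \<Rightarrow> real \<Rightarrow> real^'d \<Rightarrow> real" where
  "Phi L lam u v t \<theta> = hyp_entropy (Delta u v t) \<theta> - inner (phi L lam u v t) \<theta>"

definition momentum_mirror_flow_from ::
  "(real^'d \<Rightarrow> real) \<Rightarrow> real \<Rightarrow> (real \<Rightarrow> real^'d) \<Rightarrow> (real \<Rightarrow> real^'d) \<Rightarrow> real \<Rightarrow> bool" where
  "momentum_mirror_flow_from L lam u v T \<longleftrightarrow>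
     (\<exists>G' G''. \<forall>t\<ge>T.
        ((\<lambda>s. grad (Phi L lam u v s) (u s * v s)) has_vector_derivative G' t) (at t within {T..}) \<and>
        (G' has_vector_derivative G'' t) (at t within {T..}) \<and>
        lam *\<^sub>R G'' t + G' t + grad L (u t * v t) = 0)"

end

theory Submission
  imports Defs
begin

lemma ftc_Ici:
  fixes h :: "real \<Rightarrow> 'a::banach"
  assumes "continuous_on {0..} h" "t \<ge> 0"
  shows "((\<lambda>s. integral {0..s} h) has_vector_derivative h t) (at t within {0..})"
proof -
  have "((\<lambda>s. integral {0..s} h) has_vector_derivative h t) (at t within {0..t+1})"
    by (rule integral_has_vector_derivative) (use assms in \<open>auto intro: continuous_on_subset\<close>)
  moreover have "at t within {0..t+1} = at t within {0..}"
    by (rule at_within_nhd[where S="{t - 1 <..< t + 1}"]) auto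
  ultimately show ?thesis by simp
qed

lemma arsinh_ln:
  fixes a b :: real
  assumes "a > 0" "b > 0"
  shows "arsinh ((a\<^sup>2 - b\<^sup>2) / (2 * (a * b))) = ln a - ln b"
proof -
  have "sinh (ln a - ln b) = (a\<^sup>2 - b\<^sup>2) / (2 * (a * b))"
    using assms by (simp add: sinh_def exp_diff exp_minus field_simps power2_eq_square)
  then show ?thesis by (metis arsinh_sinh_real)
qed

lemma grad_sqloss:
  fixes X :: "real^'d^'n" and y :: "real^'n"
  shows "grad (sqloss X y) \<theta> = (\<chi> j. - (1 / real CARD('n)) * (\<Sum>i\<in>UNIV. (y $ i - inner (X $ i) \<theta>) * X $ i $ j))"
proof -
  have "((\<lambda>s. sqloss X y (\<theta> + s *\<^sub>R axis j 1)) has_real_derivative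
     - (1 / real CARD('n)) * (\<Sum>i\<in>UNIV. (y $ i - inner (X $ i) \<theta>) * X $ i $ j)) (at 0)" for j
  proof -
    have e: "sqloss X y (\<theta> + s *\<^sub>R axis j 1) = (1 / (2 * real CARD('n))) * (\<Sum>i\<in>UNIV. (y $ i - inner (X $ i) \<theta> - s * X $ i $ j)\<^sup>2)" for s
      by (simp add: sqloss_def inner_add_right inner_axis algebra_simps)
    show ?thesis unfolding e
      apply (auto intro!: derivative_eq_intros simp: sum_distrib_left sum_negf[symmetric] algebra_simps)
      apply (rule sum.cong)
       apply (auto simp: field_simps)
      done
  qed
  then have "\<And>j. deriv (\<lambda>s. sqloss X y (\<theta> + s *\<^sub>R axis j 1)) 0 = - (1 / real CARD('n)) * (\<Sum>i\<in>UNIV. (y $ i - inner (X $ i) \<theta>) * X $ i $ j)"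
    by (rule DERIV_imp_deriv)
  then show ?thesis unfolding grad_def by presburger
qed

lemma arsinh_chain:
  fixes f :: "real \<Rightarrow> real"
  assumes "(f has_real_derivative f') (at x within S)"
  shows "((\<lambda>x. arsinh (f x)) has_real_derivative (1 / sqrt ((f x)\<^sup>2 + 1)) * f') (at x within S)"
  using DERIV_chain2[OF arsinh_real_has_field_derivative assms] by simp

lemma arsinh_chain':
  fixes f :: "real \<Rightarrow> real"
  assumes "(f has_real_derivative f') (at x within S)" "E = (1 / sqrt ((f x)\<^sup>2 + 1)) * f'"
  shows "((\<lambda>x. arsinh (f x)) has_real_derivative E) (at x within S)"
  using arsinh_chain[OF assms(1)] assms(2) by simp

lemma hyp_deriv1:
  fixes D x c :: real
  assumes "D > 0"
  shows "((\<lambda>s. 2 * (x + s * c) * arsinh (2 * (x + s * c) / D) - sqrt (4 * (x + s * c)\<^sup>2 + D\<^sup>2) + D)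
     has_real_derivative (2 * c * arsinh (2 * x / D))) (at 0)"
proof -
  have pos: "4 * x\<^sup>2 + D\<^sup>2 > 0" using assms by (simp add: add_nonneg_pos)
  have sq: "sqrt ((2 * x / D)\<^sup>2 + 1) = sqrt (4 * x\<^sup>2 + D\<^sup>2) / D"
  proof -
    have "(2 * x / D)\<^sup>2 + 1 = (4 * x\<^sup>2 + D\<^sup>2) / D\<^sup>2" using assms by (simp add: field_simps power2_eq_square)
    then show ?thesis using assms by (simp add: real_sqrt_divide)
  qed
  have d1: "((\<lambda>s. 2 * (x + s * c)) has_real_derivative 2 * c) (at 0)"
    by (auto intro!: derivative_eq_intros)
  have d2: "((\<lambda>s. 2 * (x + s * c) / D) has_real_derivative 2 * c / D) (at 0)"
    using assms by (auto intro!: derivative_eq_intros)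
  have d3: "((\<lambda>s. arsinh (2 * (x + s * c) / D)) has_real_derivative (1 / sqrt ((2 * x / D)\<^sup>2 + 1)) * (2 * c / D)) (at 0)"
    using arsinh_chain[OF d2] by simp
  have d4: "((\<lambda>s. 2 * (x + s * c) * arsinh (2 * (x + s * c) / D)) has_real_derivative
      2 * c * arsinh (2 * x / D) + (1 / sqrt ((2 * x / D)\<^sup>2 + 1)) * (2 * c / D) * (2 * x)) (at 0)"
    using DERIV_mult[OF d1 d3] by simp
  have d5: "((\<lambda>s. sqrt (4 * (x + s * c)\<^sup>2 + D\<^sup>2)) has_real_derivative 4 * x * c / sqrt (4 * x\<^sup>2 + D\<^sup>2)) (at 0)"
    using pos by (auto intro!: derivative_eq_intros simp: field_simps)
  note d6 = DERIV_add[OF DERIV_diff[OF d4 d5] DERIV_const[of D]]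
  moreover have "(1 / sqrt ((2 * x / D)\<^sup>2 + 1)) * (2 * c / D) * (2 * x) - 4 * x * c / sqrt (4 * x\<^sup>2 + D\<^sup>2) = 0"
    unfolding sq using assms pos by (simp add: field_simps)
  ultimately show ?thesis by simp
qed

lemma grad_Phi_form:
  fixes D p :: "real^'d"
  assumes "\<forall>i. D $ i > 0"
  shows "grad (\<lambda>\<theta>. hyp_entropy D \<theta> - inner p \<theta>) \<theta> = (\<chi> j. (1/2) * arsinh (2 * \<theta> $ j / D $ j) - p $ j)"
proof -
  have "((\<lambda>s. hyp_entropy D (\<theta> + s *\<^sub>R axis j 1) - inner p (\<theta> + s *\<^sub>R axis j 1)) has_real_derivative
     (1/2) * arsinh (2 * \<theta> $ j / D $ j) - p $ j) (at 0)" for j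
  proof -
    define a :: "'d \<Rightarrow> real" where "a i = axis j 1 $ i" for i
    have e: "hyp_entropy D (\<theta> + s *\<^sub>R axis j 1) - inner p (\<theta> + s *\<^sub>R axis j 1) =
      (1/4) * (\<Sum>i\<in>UNIV. 2 * (\<theta> $ i + s * a i) * arsinh (2 * (\<theta> $ i + s * a i) / D $ i)
        - sqrt (4 * (\<theta> $ i + s * a i)\<^sup>2 + (D $ i)\<^sup>2) + D $ i) - (inner p \<theta> + s * p $ j)" for s
      by (simp add: hyp_entropy_def a_def inner_add_right inner_axis del: axis_nth)
    have "((\<lambda>s. (1/4) * (\<Sum>i\<in>UNIV. 2 * (\<theta> $ i + s * a i) * arsinh (2 * (\<theta> $ i + s * a i) / D $ i)
        - sqrt (4 * (\<theta> $ i + s * a i)\<^sup>2 + (D $ i)\<^sup>2) + D $ i) - (inner p \<theta> + s * p $ j)) has_real_derivative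
        (1/4) * (\<Sum>i\<in>UNIV. 2 * a i * arsinh (2 * \<theta> $ i / D $ i)) - (0 + p $ j)) (at 0)"
      using assms by (intro DERIV_diff DERIV_cmult DERIV_sum DERIV_add DERIV_const hyp_deriv1 DERIV_cmult_right[where f="\<lambda>s. s", OF DERIV_ident, simplified]) auto
    moreover have "(\<Sum>i\<in>UNIV. 2 * a i * arsinh (2 * \<theta> $ i / D $ i)) = 2 * arsinh (2 * \<theta> $ j / D $ j)"
    proof -
      have "(\<Sum>i\<in>UNIV. 2 * a i * arsinh (2 * \<theta> $ i / D $ i)) = (\<Sum>i\<in>UNIV. if i = j then 2 * arsinh (2 * \<theta> $ j / D $ j) else 0)"
        by (rule sum.cong) (auto simp: a_def axis_def)
      then show ?thesis by simp
    qed
    ultimately show ?thesis unfolding e by simp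
  qed
  then have "\<And>j. deriv (\<lambda>s. hyp_entropy D (\<theta> + s *\<^sub>R axis j 1) - inner p (\<theta> + s *\<^sub>R axis j 1)) 0 = (1/2) * arsinh (2 * \<theta> $ j / D $ j) - p $ j"
    by (rule DERIV_imp_deriv)
  then show ?thesis unfolding grad_def by presburger
qed

lemma comp_identity:
  fixes u v x :: real
  assumes "\<bar>u\<^sup>2 - v\<^sup>2\<bar> > 0"
  shows "(1/2) * arsinh (2 * (u * v) / \<bar>u\<^sup>2 - v\<^sup>2\<bar>)
     - (1/2) * arsinh ((((u + v) * exp (- x))\<^sup>2 - ((u - v) * exp x)\<^sup>2) / (2 * \<bar>u\<^sup>2 - v\<^sup>2\<bar>)) = x"
proof -
  define a where "a = \<bar>u + v\<bar>"
  define b where "b = \<bar>u - v\<bar>"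
  have d: "\<bar>u\<^sup>2 - v\<^sup>2\<bar> = a * b" unfolding a_def b_def
    by (simp add: abs_mult[symmetric] power2_eq_square algebra_simps)
  have ab: "a > 0" "b > 0" using assms d by (auto simp: a_def b_def zero_less_mult_iff)
  have a2: "a\<^sup>2 = (u + v)\<^sup>2" "b\<^sup>2 = (u - v)\<^sup>2" by (simp_all add: a_def b_def)
  have e1: "2 * (u * v) / \<bar>u\<^sup>2 - v\<^sup>2\<bar> = (a\<^sup>2 - b\<^sup>2) / (2 * (a * b))"
    unfolding d a2 by (simp add: power2_eq_square field_simps)
  have e2: "(((u + v) * exp (- x))\<^sup>2 - ((u - v) * exp x)\<^sup>2) / (2 * \<bar>u\<^sup>2 - v\<^sup>2\<bar>)
      = ((a * exp (-x))\<^sup>2 - (b * exp x)\<^sup>2) / (2 * ((a * exp (-x)) * (b * exp x)))"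
  proof -
    have "(a * exp (-x)) * (b * exp x) = a * b" by (simp add: exp_minus field_simps)
    moreover have "(a * exp (-x))\<^sup>2 = ((u + v) * exp (- x))\<^sup>2" "(b * exp x)\<^sup>2 = ((u - v) * exp x)\<^sup>2"
      by (simp_all add: power_mult_distrib a2)
    ultimately show ?thesis unfolding d by simp
  qed
  have "arsinh (2 * (u * v) / \<bar>u\<^sup>2 - v\<^sup>2\<bar>) = ln a - ln b" unfolding e1 using ab by (rule arsinh_ln)
  moreover have "arsinh ((((u + v) * exp (- x))\<^sup>2 - ((u - v) * exp x)\<^sup>2) / (2 * \<bar>u\<^sup>2 - v\<^sup>2\<bar>))
     = ln (a * exp (-x)) - ln (b * exp x)" unfolding e2 using ab by (intro arsinh_ln) auto
  ultimately show ?thesis using ab by (simp add: ln_mult field_simps)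
qed

lemma grad_Phi_xi:
  assumes "\<forall>i. Delta u v t $ i > 0"
  shows "grad (Phi L lam u v t) (u t * v t) = xi L lam u v t"
proof -
  have "Phi L lam u v t = (\<lambda>\<theta>. hyp_entropy (Delta u v t) \<theta> - inner (phi L lam u v t) \<theta>)"
    by (rule ext) (simp add: Phi_def)
  then have g: "grad (Phi L lam u v t) (u t * v t) = (\<chi> j. (1/2) * arsinh (2 * (u t * v t) $ j / Delta u v t $ j) - phi L lam u v t $ j)"
    using grad_Phi_form[OF assms] by simp
  show ?thesis unfolding g
  proof (rule vec_eq_iff[THEN iffD2], rule allI)
    fix j
    have pos: "\<bar>(u t $ j)\<^sup>2 - (v t $ j)\<^sup>2\<bar> > 0" using assms by (auto simp: Delta_def)
    show "(\<chi> j. (1/2) * arsinh (2 * (u t * v t) $ j / Delta u v t $ j) - phi L lam u v t $ j) $ j = xi L lam u v t $ j"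
      using comp_identity[OF pos, of "xi L lam u v t $ j"]
      by (simp add: Delta_def phi_def alpha_plus_def alpha_minus_def)
  qed
qed

lemma xi_formula:
  fixes g :: "real \<Rightarrow> 'a::euclidean_space"
  assumes lam: "lam > 0" and g: "continuous_on {0..} g" and t: "t \<ge> 0"
  shows "- integral {0..t} (\<lambda>s. (1 - exp (- (t - s) / lam)) *\<^sub>R g s)
     = - integral {0..t} g + exp (- t / lam) *\<^sub>R integral {0..t} (\<lambda>s. exp (s / lam) *\<^sub>R g s)"
proof -
  have c1: "continuous_on {0..t} g" using g by (rule continuous_on_subset) auto
  have c2: "continuous_on {0..t} (\<lambda>s. exp (s / lam) *\<^sub>R g s)"
    using lam by (auto intro!: continuous_intros c1)
  have i1: "g integrable_on {0..t}" using c1 by (rule integrable_continuous_interval)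
  have i2: "(\<lambda>s. exp (- t / lam) *\<^sub>R (exp (s / lam) *\<^sub>R g s)) integrable_on {0..t}"
    using c2 by (intro integrable_cmul integrable_continuous_interval)
  have "(\<lambda>s. (1 - exp (- (t - s) / lam)) *\<^sub>R g s) = (\<lambda>s. g s - exp (- t / lam) *\<^sub>R (exp (s / lam) *\<^sub>R g s))"
  proof
    fix s
    have "exp (- (t - s) / lam) = exp (- t / lam) * exp (s / lam)"
      by (simp add: exp_add[symmetric] diff_divide_distrib)
    then show "(1 - exp (- (t - s) / lam)) *\<^sub>R g s = g s - exp (- t / lam) *\<^sub>R (exp (s / lam) *\<^sub>R g s)"
      by (simp add: scaleR_diff_left)
  qed
  then show ?thesis using integral_diff[OF i1 i2] by (simp del: scaleR_scaleR)
qed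

lemma xi_flow:
  fixes g :: "real \<Rightarrow> 'a::euclidean_space"
  assumes lam: "lam > 0" and g: "continuous_on {0..} g" and T: "T \<ge> 0"
    and H: "\<And>t. t \<ge> T \<Longrightarrow> H t = - integral {0..t} (\<lambda>s. (1 - exp (- (t - s) / lam)) *\<^sub>R g s)"
  shows "\<exists>G' G''. \<forall>t\<ge>T. (H has_vector_derivative G' t) (at t within {T..}) \<and>
        (G' has_vector_derivative G'' t) (at t within {T..}) \<and>
        lam *\<^sub>R G'' t + G' t + g t = 0"
proof -
  define A where "A t = integral {0..t} g" for t
  define B where "B t = integral {0..t} (\<lambda>s. exp (s / lam) *\<^sub>R g s)" for t
  define F where "F t = - A t + exp (- t / lam) *\<^sub>R B t" for t
  define G' where "G' t = (- (1 / lam) * exp (- t / lam)) *\<^sub>R B t" for t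
  define G'' where "G'' t = ((1 / lam)\<^sup>2 * exp (- t / lam)) *\<^sub>R B t - (1 / lam) *\<^sub>R g t" for t
  have cB: "continuous_on {0..} (\<lambda>s. exp (s / lam) *\<^sub>R g s)" using lam by (auto intro!: continuous_intros g)
  have dA: "(A has_vector_derivative g t) (at t within {T..})" if "t \<ge> T" for t
    unfolding A_def
    by (rule has_vector_derivative_within_subset[OF ftc_Ici[OF g]]) (use that T in auto)
  have dB: "(B has_vector_derivative exp (t / lam) *\<^sub>R g t) (at t within {T..})" if "t \<ge> T" for t
    unfolding B_def
    by (rule has_vector_derivative_within_subset[OF ftc_Ici[OF cB]]) (use that T in auto)
  have dE: "((\<lambda>t. exp (- t / lam)) has_real_derivative (- (1 / lam) * exp (- t / lam))) (at t within {T..})" for t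
    using lam by (auto intro!: derivative_eq_intros simp: field_simps)
  have dE2: "((\<lambda>t. - (1 / lam) * exp (- t / lam)) has_real_derivative ((1 / lam)\<^sup>2 * exp (- t / lam))) (at t within {T..})" for t
    using lam by (auto intro!: derivative_eq_intros simp: field_simps power2_eq_square)
  have "(H has_vector_derivative G' t) (at t within {T..}) \<and>
        (G' has_vector_derivative G'' t) (at t within {T..}) \<and>
        lam *\<^sub>R G'' t + G' t + g t = 0" if t: "t \<ge> T" for t
  proof (intro conjI)
    have "(F has_vector_derivative (- g t + (exp (- t / lam) *\<^sub>R (exp (t / lam) *\<^sub>R g t) + (- (1 / lam) * exp (- t / lam)) *\<^sub>R B t))) (at t within {T..})"
      unfolding F_def
      by (intro has_vector_derivative_add has_vector_derivative_minus has_vector_derivative_scaleR dA dB dE t)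
    moreover have "exp (- t / lam) *\<^sub>R (exp (t / lam) *\<^sub>R g t) = g t"
    proof -
      have "exp (- t / lam) * exp (t / lam) = 1" by (metis exp_minus_inverse minus_divide_left mult.commute)
      then show ?thesis by simp
    qed
    ultimately have dF: "(F has_vector_derivative G' t) (at t within {T..})"
      by (simp add: G'_def)
    show "(H has_vector_derivative G' t) (at t within {T..})"
    proof (rule has_vector_derivative_transform_within[OF dF zero_less_one])
      show "t \<in> {T..}" using t by simp
      fix x assume "x \<in> {T..}"
      then show "F x = H x" using H[of x] xi_formula[OF lam g, of x] T by (simp add: F_def A_def B_def)
    qed
    have dG: "(G' has_vector_derivative ((- (1 / lam) * exp (- t / lam)) *\<^sub>R (exp (t / lam) *\<^sub>R g t) + ((1 / lam)\<^sup>2 * exp (- t / lam)) *\<^sub>R B t)) (at t within {T..})"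
      unfolding G'_def
      by (intro has_vector_derivative_scaleR dB dE2 t)
    have ee: "(- (1 / lam) * exp (- t / lam)) *\<^sub>R (exp (t / lam) *\<^sub>R g t) = - (1 / lam) *\<^sub>R g t"
    proof -
      have "exp (- t / lam) * exp (t / lam) = 1" by (metis exp_minus_inverse minus_divide_left mult.commute)
      then show ?thesis by (simp add: mult.assoc)
    qed
    have e2: "(- (1 / lam) * exp (- t / lam)) *\<^sub>R (exp (t / lam) *\<^sub>R g t) + ((1 / lam)\<^sup>2 * exp (- t / lam)) *\<^sub>R B t = G'' t"
      unfolding ee G''_def by simp
    show "(G' has_vector_derivative G'' t) (at t within {T..})"
      using dG unfolding e2 .
    show "lam *\<^sub>R G'' t + G' t + g t = 0"
      using lam by (simp add: G''_def G'_def scaleR_diff_right power2_eq_square)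
  qed
  then show ?thesis by blast
qed

lemma flow_from:
  fixes X :: "real^'d^'n" and y :: "real^'n" and u v :: "real \<Rightarrow> real^'d"
  assumes lam: "lam > 0" and T: "T \<ge> 0"
    and g: "continuous_on {0..} (\<lambda>s. grad (sqloss X y) (u s * v s))"
    and pos: "\<And>t. t \<ge> T \<Longrightarrow> \<forall>i. Delta u v t $ i > 0"
  shows "momentum_mirror_flow_from (sqloss X y) lam u v T"
  unfolding momentum_mirror_flow_from_def
proof (rule xi_flow[OF lam g T])
  fix t :: real assume "t \<ge> T"
  then show "grad (Phi (sqloss X y) lam u v t) (u t * v t) =
     - integral {0..t} (\<lambda>s. (1 - exp (- (t - s) / lam)) *\<^sub>R grad (sqloss X y) (u s * v s))"
    using grad_Phi_xi[OF pos] by (simp add: xi_def)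
qed

theorem proposition4:
  fixes X :: "real^'d^'n" and y :: "real^'n" and lam :: real
    and u v u' v' u'' v'' :: "real \<Rightarrow> real^'d" and Dinf :: "real^'d"
  assumes lam_pos: "lam > 0"
    and du: "\<And>t. t \<ge> 0 \<Longrightarrow> (u has_vector_derivative u' t) (at t within {0..})"
    and dv: "\<And>t. t \<ge> 0 \<Longrightarrow> (v has_vector_derivative v' t) (at t within {0..})"
    and ddu: "\<And>t. t \<ge> 0 \<Longrightarrow> (u' has_vector_derivative u'' t) (at t within {0..})"
    and ddv: "\<And>t. t \<ge> 0 \<Longrightarrow> (v' has_vector_derivative v'' t) (at t within {0..})"
    and ode_u: "\<And>t. t \<ge> 0 \<Longrightarrow> lam *\<^sub>R u'' t + u' t + grad (sqloss X y) (u t * v t) * v t = 0"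
    and ode_v: "\<And>t. t \<ge> 0 \<Longrightarrow> lam *\<^sub>R v'' t + v' t + grad (sqloss X y) (u t * v t) * u t = 0"
    and init_vel: "u' 0 = 0" "v' 0 = 0"
    and init_bal: "\<forall>i. Delta u v 0 $ i \<noteq> 0"
    and bounded_traj: "bounded (u ` {0..})" "bounded (v ` {0..})"
    and Dinf_lim: "(Delta u v \<longlongrightarrow> Dinf) at_top"
    and Dinf_nz: "\<forall>i. Dinf $ i \<noteq> 0"
  shows "(\<exists>T\<ge>0. (\<forall>t\<ge>T. \<forall>i. Delta u v t $ i > 0) \<and> momentum_mirror_flow_from (sqloss X y) lam u v T)
       \<and> ((\<forall>t\<ge>0. \<forall>i. Delta u v t $ i \<noteq> 0) \<longrightarrow> momentum_mirror_flow_from (sqloss X y) lam u v 0)"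
proof -
  have cu: "continuous_on {0..} u"
    using du by (auto simp: continuous_on_eq_continuous_within intro: has_vector_derivative_continuous)
  have cv: "continuous_on {0..} v"
    using dv by (auto simp: continuous_on_eq_continuous_within intro: has_vector_derivative_continuous)
  have g: "continuous_on {0..} (\<lambda>s. grad (sqloss X y) (u s * v s))"
  proof -
    have e: "(\<lambda>x. u x * v x) = (\<lambda>x. \<chi> k. u x $ k * v x $ k)" by (auto simp: vec_eq_iff)
    have "continuous_on {0..} (\<lambda>x. u x * v x)" unfolding e by (intro continuous_intros cu cv)
    then show ?thesis unfolding grad_sqloss by (intro continuous_intros)
  qed
  have Dge: "Delta u v t $ i \<ge> 0" for t i by (simp add: Delta_def)
  have ev: "eventually (\<lambda>t. \<forall>i. Delta u v t $ i > 0) at_top"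
  proof (rule eventually_all_finite)
    fix i
    have lim: "((\<lambda>t. Delta u v t $ i) \<longlongrightarrow> Dinf $ i) at_top"
      using tendsto_vec_nth[OF Dinf_lim] .
    have "Dinf $ i \<ge> 0"
      by (rule tendsto_lowerbound[OF lim]) (auto simp: Dge)
    then have "Dinf $ i > 0" using Dinf_nz by (simp add: order_le_less)
    then show "eventually (\<lambda>t. Delta u v t $ i > 0) at_top"
      by (rule order_tendstoD(1)[OF lim])
  qed
  then obtain N where N: "\<And>t. t \<ge> N \<Longrightarrow> \<forall>i. Delta u v t $ i > 0"
    by (auto simp: eventually_at_top_linorder)
  define T where "T = max N 0"
  have part1: "\<exists>T\<ge>0. (\<forall>t\<ge>T. \<forall>i. Delta u v t $ i > 0) \<and> momentum_mirror_flow_from (sqloss X y) lam u v T"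
  proof (intro exI conjI)
    show "T \<ge> 0" by (simp add: T_def)
    show "\<forall>t\<ge>T. \<forall>i. Delta u v t $ i > 0" using N by (simp add: T_def)
    show "momentum_mirror_flow_from (sqloss X y) lam u v T"
      by (rule flow_from[OF lam_pos _ g]) (use N in \<open>auto simp: T_def\<close>)
  qed
  have part2: "momentum_mirror_flow_from (sqloss X y) lam u v 0" if h: "\<forall>t\<ge>0. \<forall>i. Delta u v t $ i \<noteq> 0"
  proof (rule flow_from[OF lam_pos _ g])
    fix t :: real assume "0 \<le> t"
    then show "\<forall>i. 0 < Delta u v t $ i" using h Dge by (metis order_le_less)
  qed simp
  show ?thesis using part1 part2 by blast
qed

end
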